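(* Let $\beta,\delta>0$, $\gamma\in\mathbb{R}$, and suppose $p(x)=\beta x^4+\gamma x^3+\delta x^2$ attains its global minimum at the origin. Then $$\int_{-\infty}^{\infty}e^{-[\beta x^4+\gamma x^3+\delta x^2]}\,dx\approx\left[\beta^{1/4}+|\gamma|^{1/3}+\delta^{1/2}\right]^{-1},$$ with implied constants independent of $\beta,\gamma,\delta$.
   Context: $X\approx Y$ means there is an absolute constant $c>0$ with $cY\le X\le c^{-1}Y$. *)

theory Defs
  imports "HOL-Analysis.Analysis"
begin

end

theory Submission
  imports Defs "HOL-Probability.Sinc_Integral"
begin

lemma disc:
  fixes \<beta> \<gamma> \<delta> :: real
  assumes b: "\<beta> > 0" and d: "\<delta> > 0"
    and h: "\<forall>x::real. \<beta> * x^4 + \<gamma> * x^3 + \<delta> * x^2 \<ge> \<beta> * 0^4 + \<gamma> * 0^3 + \<delta> * 0^2"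
  shows "\<bar>\<gamma>\<bar> \<le> 2 * sqrt \<beta> * sqrt \<delta>"
proof -
  have "\<gamma>^2 \<le> 4 * \<beta> * \<delta>"
  proof (cases "\<gamma> = 0")
    case True then show ?thesis using b d by simp
  next
    case False
    define x where "x = - \<gamma> / (2 * \<beta>)"
    have x0: "x \<noteq> 0" using False b by (simp add: x_def)
    have "0 \<le> \<beta> * x^4 + \<gamma> * x^3 + \<delta> * x^2" using h by simp
    also have "\<dots> = x^2 * (\<beta> * x^2 + \<gamma> * x + \<delta>)" by (simp add: algebra_simps power2_eq_square power3_eq_cube power4_eq_xxxx)
    finally have "0 \<le> \<beta> * x^2 + \<gamma> * x + \<delta>" using x0 by (simp add: zero_le_mult_iff)
    also have "\<beta> * x^2 + \<gamma> * x + \<delta> = \<delta> - \<gamma>^2 / (4 * \<beta>)"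
      using b by (simp add: x_def power2_eq_square field_simps)
    finally show ?thesis using b by (simp add: field_simps)
  qed
  then have "sqrt (\<gamma>^2) \<le> sqrt (4 * \<beta> * \<delta>)" by (rule real_sqrt_le_mono)
  then show ?thesis using b d by (simp add: real_sqrt_mult)
qed

lemma ts:
  fixes a b t :: real
  assumes a: "a > 0" and b: "b > 0" and t: "t \<ge> 0"
  shows "(a * t * \<bar>t - b / a\<bar>)^2 \<ge> a^2 * (min t \<bar>t - b / a\<bar>)^4"
    and "(a * t * \<bar>t - b / a\<bar>)^2 \<ge> b^2 / 4 * (min t \<bar>t - b / a\<bar>)^2"
proof -
  define s where "s = \<bar>t - b / a\<bar>"
  define m where "m = min t s"
  have m0: "m \<ge> 0" "m \<le> t" "m \<le> s" using t by (auto simp: m_def s_def)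
  have "m * m \<le> t * s" using m0 by (intro mult_mono) (auto simp: s_def)
  then have "a * (m*m) \<le> a * (t * s)" using a by simp
  then have "(a * (m*m))^2 \<le> (a * t * s)^2" using a m0 by (intro power_mono) (auto simp: algebra_simps)
  then show "(a * t * \<bar>t - b / a\<bar>)^2 \<ge> a^2 * (min t \<bar>t - b / a\<bar>)^4"
    by (simp add: s_def[symmetric] m_def[symmetric] power_mult_distrib power4_eq_xxxx power2_eq_square mult_ac)
  have "t * s \<ge> (b / a) / 2 * m"
  proof (cases "t \<ge> (b/a)/2")
    case True
    then have "(b/a)/2 * m \<le> t * s" using m0 by (intro mult_mono) auto
    then show ?thesis by simp
  next
    case False
    then have "s \<ge> (b/a)/2" using t by (simp add: s_def)
    then have "m * ((b/a)/2) \<le> t * s" using m0 a b by (intro mult_mono) auto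
    then show ?thesis by (simp add: mult.commute)
  qed
  then have "a * ((b / a) / 2 * m) \<le> a * (t * s)" using a by (intro mult_left_mono) auto
  moreover have "a * ((b / a) / 2 * m) = b / 2 * m" using a by (simp add: field_simps)
  ultimately have "b / 2 * m \<le> a * t * s" by (simp add: mult.assoc)
  then have "(b/2*m)^2 \<le> (a * t * s)^2" using b m0 by (intro power_mono) auto
  then show "(a * t * \<bar>t - b / a\<bar>)^2 \<ge> b^2 / 4 * (min t \<bar>t - b / a\<bar>)^2"
    by (simp add: s_def[symmetric] m_def[symmetric] power_mult_distrib power2_eq_square mult_ac)
qed

lemma exp_inv: "y \<ge> 0 \<Longrightarrow> exp (- y) \<le> inverse (1 + y)" for y :: real
  by (metis exp_ge_add_one_self exp_minus le_imp_inverse_le add_pos_nonneg zero_less_one)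

lemma min_split:
  fixes K m u v :: real
  assumes K: "K > 0" and m: "m = u \<or> m = v"
  shows "inverse (1 + K * m^2) \<le> inverse (1 + K * u^2) + inverse (1 + K * v^2)"
proof -
  have "inverse (1 + K * u^2) \<ge> 0" "inverse (1 + K * v^2) \<ge> 0" using K by (auto intro: add_nonneg_nonneg)
  then show ?thesis using m by auto
qed

lemma upper_pt:
  fixes \<beta> \<gamma> \<delta> x :: real
  assumes b: "\<beta> > 0" and d: "\<delta> > 0" and g: "\<bar>\<gamma>\<bar> \<le> 2 * sqrt \<beta> * sqrt \<delta>"
  defines "K \<equiv> max (sqrt \<beta>) (\<delta> / 4)" and "x0 \<equiv> sqrt \<delta> / sqrt \<beta>"
  shows "exp (- (\<beta> * x^4 + \<gamma> * x^3 + \<delta> * x^2)) \<le>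
     2 * inverse (1 + K * x^2) + 2 * inverse (1 + K * (x - x0)^2) + 2 * inverse (1 + K * (x + x0)^2)"
proof -
  define a where "a = sqrt \<beta>"
  define bb where "bb = sqrt \<delta>"
  have a: "a > 0" "a^2 = \<beta>" using b by (auto simp: a_def)
  have bb: "bb > 0" "bb^2 = \<delta>" using d by (auto simp: bb_def)
  define t where "t = \<bar>x\<bar>"
  define s where "s = \<bar>t - bb / a\<bar>"
  define m where "m = min t s"
  have t0: "t \<ge> 0" by (simp add: t_def)
  have K: "K > 0" using b by (simp add: K_def less_max_iff_disj)
  define P where "P = \<beta> * x^4 + \<gamma> * x^3 + \<delta> * x^2"
  have x4: "x^4 = t^4" "x^2 = t^2" by (simp_all add: t_def)
  have "\<gamma> * x^3 \<ge> - (2 * a * bb * t^3)"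
  proof -
    have "\<bar>\<gamma> * x^3\<bar> = \<bar>\<gamma>\<bar> * t^3" by (simp add: t_def abs_mult power_abs)
    also have "\<dots> \<le> (2 * a * bb) * t^3" using g t0 by (intro mult_right_mono) (auto simp: a_def bb_def)
    finally show ?thesis using abs_ge_minus_self[of "\<gamma> * x^3"] by linarith
  qed
  moreover have "(a * t * s)^2 = \<beta> * t^4 - (2 * a * bb) * t^3 + \<delta> * t^2"
  proof -
    have "(a * t * s)^2 = (a * t * (t - bb / a))^2" by (simp add: s_def power_mult_distrib)
    also have "a * t * (t - bb / a) = a * t^2 - bb * t" using a by (simp add: field_simps power2_eq_square)
    finally show ?thesis using a(2) bb(2) by (simp add: power2_eq_square power3_eq_cube power4_eq_xxxx algebra_simps flip: a(2) bb(2))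
  qed
  ultimately have Pge: "P \<ge> (a * t * s)^2" by (simp add: P_def x4)
  have h1: "P \<ge> \<beta> * m^4" using ts(1)[OF a(1) bb(1) t0] Pge a by (simp add: s_def m_def)
  have h2: "P \<ge> \<delta> / 4 * m^2" using ts(2)[OF a(1) bb(1) t0] Pge bb by (simp add: s_def m_def)
  have m2: "m^2 \<ge> 0" by simp
  have E: "exp (- P) \<le> 2 * inverse (1 + K * m^2)"
  proof (cases "sqrt \<beta> \<ge> \<delta> / 4")
    case True
    then have KK: "K = sqrt \<beta>" by (simp add: K_def)
    define y where "y = sqrt \<beta> * m^2"
    have y0: "y \<ge> 0" using b by (simp add: y_def)
    have "\<beta> * m^4 = y^2" using b by (simp add: y_def power_mult_distrib power4_eq_xxxx power2_eq_square)
    then have "exp (- P) \<le> exp (- (y^2))" using h1 by simp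
    also have "\<dots> \<le> inverse (1 + y^2)" by (rule exp_inv) simp
    also have "\<dots> \<le> 2 * inverse (1 + y)"
    proof -
      have "0 \<le> (y - 1/2)^2" by simp
      then have hh: "y \<le> y*y + 1/4" by (simp add: power2_eq_square algebra_simps)
      have "0 \<le> y*y" by simp
      with hh have "1 + y \<le> 2 + 2 * (y * y)" by linarith
      then have "1 + y \<le> 2 * (1 + y^2)" by (simp add: power2_eq_square)
      then show ?thesis using y0 by (simp add: field_simps)
    qed
    finally show ?thesis by (simp add: KK y_def)
  next
    case False
    then have KK: "K = \<delta> / 4" by (simp add: K_def)
    have "exp (- P) \<le> exp (- (\<delta> / 4 * m^2))" using h2 by simp
    also have "\<dots> \<le> inverse (1 + \<delta> / 4 * m^2)" by (rule exp_inv) (use d in simp)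
    also have "\<dots> \<le> 2 * inverse (1 + \<delta> / 4 * m^2)" using d by (simp add: add_pos_nonneg)
    finally show ?thesis by (simp add: KK)
  qed
  have "inverse (1 + K * m^2) \<le> inverse (1 + K * x^2) + inverse (1 + K * (x - x0)^2) + inverse (1 + K * (x + x0)^2)"
  proof -
    have x0e: "bb / a = x0" by (simp add: x0_def a_def bb_def)
    have s2: "s^2 = (x - x0)^2 \<or> s^2 = (x + x0)^2"
    proof (cases "x \<ge> 0")
      case True then show ?thesis by (simp add: s_def t_def x0e)
    next
      case False
      then have "s^2 = (- x - x0)^2" by (simp add: s_def t_def x0e)
      also have "\<dots> = (x + x0)^2" by (simp add: power2_eq_square algebra_simps)
      finally show ?thesis by simp
    qed
    have mm: "m^2 = x^2 \<or> m^2 = (x - x0)^2 \<or> m^2 = (x + x0)^2"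
      using s2 x4(2) unfolding m_def by (cases "t \<le> s") (auto simp: min_def)
    have p: "inverse (1 + K * z) \<ge> 0" if "z \<ge> 0" for z using K that by (simp add: add_pos_nonneg)
    show ?thesis using mm p[of "x^2"] p[of "(x-x0)^2"] p[of "(x+x0)^2"] by auto
  qed
  with E show ?thesis unfolding P_def by linarith
qed

lemma scaled: assumes K: "K > 0"
  shows "has_bochner_integral lborel (\<lambda>x::real. inverse (1 + K * (x - c)^2)) (pi / sqrt K)"
proof -
  have i: "integrable lborel (\<lambda>x::real. inverse (1 + x^2))"
    using integrable_inverse_1_plus_square by (simp add: set_integrable_def)
  have "integral\<^sup>L lborel (\<lambda>x::real. inverse (1 + x^2)) = pi"
    using LBINT_inverse_1_plus_square by (simp add: interval_lebesgue_integral_def set_lebesgue_integral_def)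
  with i have base: "has_bochner_integral lborel (\<lambda>x::real. inverse (1 + x^2)) pi" by (simp add: has_bochner_integral_iff)
  have s: "sqrt K \<noteq> 0" using K by simp
  have "has_bochner_integral lborel (\<lambda>x. (\<lambda>y::real. inverse (1 + y^2)) (- sqrt K * c + sqrt K * x)) (pi /\<^sub>R \<bar>sqrt K\<bar>)"
    using base lborel_has_bochner_integral_real_affine_iff[OF s, of "\<lambda>y::real. inverse (1 + y^2)" pi "- sqrt K * c"] by simp
  moreover have "\<And>x. (- sqrt K * c + sqrt K * x)^2 = K * (x - c)^2"
    using K by (simp add: power2_eq_square algebra_simps)
  ultimately show ?thesis using K by (simp add: divide_inverse mult.commute)
qed

lemma main_bounds:
  fixes \<beta> \<gamma> \<delta> :: real
  assumes b: "\<beta> > 0" and d: "\<delta> > 0"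
    and h: "\<forall>x::real. \<beta> * x^4 + \<gamma> * x^3 + \<delta> * x^2 \<ge> \<beta> * 0^4 + \<gamma> * 0^3 + \<delta> * 0^2"
  defines "I \<equiv> (LBINT x. exp (- (\<beta> * x^4 + \<gamma> * x^3 + \<delta> * x^2)))"
    and "Y \<equiv> 1 / (\<beta> powr (1/4) + \<bar>\<gamma>\<bar> powr (1/3) + \<delta> powr (1/2))"
  shows "1/200 * Y \<le> I \<and> I \<le> Y / (1/200)"
proof -
  have g: "\<bar>\<gamma>\<bar> \<le> 2 * sqrt \<beta> * sqrt \<delta>" by (rule disc[OF b d h])
  define A where "A = \<beta> powr (1/4)"
  define B where "B = sqrt \<delta>"
  define G where "G = \<bar>\<gamma>\<bar> powr (1/3)"
  have A0: "A > 0" using b by (simp add: A_def)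
  have B0: "B > 0" using d by (simp add: B_def)
  have A2: "A^2 = sqrt \<beta>"
  proof -
    have "A^2 = A powr (real 2)" using A0 by (rule powr_realpow[symmetric])
    also have "\<dots> = \<beta> powr (1/4 * real 2)" by (simp add: A_def powr_powr)
    also have "\<dots> = sqrt \<beta>" using b by (simp add: powr_half_sqrt)
    finally show ?thesis .
  qed
  have A4: "A^4 = \<beta>"
  proof -
    have "A^4 = A powr (real 4)" using A0 by (rule powr_realpow[symmetric])
    also have "\<dots> = \<beta> powr (1/4 * real 4)" by (simp add: A_def powr_powr)
    also have "\<dots> = \<beta>" using b by simp
    finally show ?thesis .
  qed
  have Yeq: "Y = 1 / (A + G + B)" using d by (simp add: Y_def A_def G_def B_def powr_half_sqrt)
  have G0: "G \<ge> 0" by (simp add: G_def)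
  have GAB: "G \<le> A + B"
  proof -
    have "\<bar>\<gamma>\<bar> \<le> 2 * A^2 * B" using g by (simp add: A2 B_def)
    also have "\<dots> \<le> (A + B)^3"
    proof -
      have e: "(A + B)^3 = A^3 + 3 * (A^2 * B) + 3 * (A * B^2) + B^3"
        by (simp add: power3_eq_cube power2_eq_square algebra_simps)
      have "A^3 \<ge> 0" "A^2 * B \<ge> 0" "A * B^2 \<ge> 0" "B^3 \<ge> 0" using A0 B0 by auto
      then show ?thesis unfolding e by linarith
    qed
    finally have "G \<le> ((A + B)^3) powr (1/3)" unfolding G_def by (intro powr_mono2) auto
    also have "\<dots> = ((A + B) powr (real 3)) powr (1/3)" using A0 B0 by (simp add: powr_realpow)
    also have "\<dots> = A + B" using A0 B0 by (simp only: powr_powr) simp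
    finally show ?thesis .
  qed
  define K where "K = max (sqrt \<beta>) (\<delta> / 4)"
  define x0 where "x0 = sqrt \<delta> / sqrt \<beta>"
  have K0: "K > 0" using b by (simp add: K_def less_max_iff_disj)
  have KA: "sqrt K \<ge> A"
  proof -
    have "A = sqrt (A^2)" using A0 by simp
    also have "\<dots> \<le> sqrt K" unfolding A2 K_def by simp
    finally show ?thesis .
  qed
  have KB: "sqrt K \<ge> B / 2"
  proof -
    have "B / 2 = sqrt (\<delta> / 4)" by (simp add: B_def real_sqrt_divide)
    also have "\<dots> \<le> sqrt K" unfolding K_def by simp
    finally show ?thesis .
  qed
  define f where "f = (\<lambda>x::real. exp (- (\<beta> * x^4 + \<gamma> * x^3 + \<delta> * x^2)))"
  define M where "M = (\<lambda>x::real. 2 * inverse (1 + K * (x - 0)^2) + 2 * inverse (1 + K * (x - x0)^2) + 2 * inverse (1 + K * (x - (- x0))^2))"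
  have HM: "has_bochner_integral lborel M (2 * (pi / sqrt K) + 2 * (pi / sqrt K) + 2 * (pi / sqrt K))"
    unfolding M_def
    by (intro has_bochner_integral_add has_bochner_integral_mult_right scaled K0)
  have HMi: "integrable lborel M" using HM by (simp add: has_bochner_integral_iff)
  have fM: "f x \<le> M x" for x
    using upper_pt[OF b d g, of x] unfolding f_def M_def K_def x0_def by simp
  have fmeas: "f \<in> borel_measurable lborel" unfolding f_def by measurable
  have fint: "integrable lborel f"
  proof (rule Bochner_Integration.integrable_bound[OF HMi fmeas])
    show "AE x in lborel. norm (f x) \<le> norm (M x)"
      using fM by (auto simp: f_def intro: order_trans[OF _ abs_ge_self])
  qed
  have Iup: "I \<le> 6 * pi / sqrt K"
  proof -
    have "I = integral\<^sup>L lborel f" by (simp add: I_def f_def)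
    also have "\<dots> \<le> integral\<^sup>L lborel M"
      by (intro integral_mono fint HMi fM)
    also have "\<dots> = 6 * pi / sqrt K" using has_bochner_integral_integral_eq[OF HM] by simp
    finally show ?thesis .
  qed
  define r where "r = 1 / (A + B)"
  have r0: "r > 0" using A0 B0 by (simp add: r_def)
  have Ar: "A * r \<le> 1" "B * r \<le> 1" using A0 B0 by (simp_all add: r_def field_simps)
  define L where "L = (\<lambda>x::real. exp (- 4) * (indicator {-r..r} x :: real))"
  have HL: "has_bochner_integral lborel L (exp (-4) * (2 * r))"
  proof -
    have "has_bochner_integral lborel (indicator {-r..r}) (measure lborel {-r..r})"
      by (rule has_bochner_integral_real_indicator) (auto simp: emeasure_lborel_Icc_eq)
    then have "has_bochner_integral lborel (indicator {-r..r}) (2 * r)" using r0 by simp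
    then show ?thesis unfolding L_def by (rule has_bochner_integral_mult_right)
  qed
  have HLi: "integrable lborel L" using HL by (simp add: has_bochner_integral_iff)
  have Lf: "L x \<le> f x" for x
  proof (cases "x \<in> {-r..r}")
    case False then show ?thesis by (simp add: L_def f_def)
  next
    case True
    define t where "t = \<bar>x\<bar>"
    have t: "t \<ge> 0" "t \<le> r" using True by (auto simp: t_def)
    have x4: "x^4 = t^4" "x^2 = t^2" "\<bar>x^3\<bar> = t^3" by (simp_all add: t_def power_abs)
    have "\<gamma> * x^3 \<le> \<bar>\<gamma>\<bar> * t^3" using x4(3) abs_ge_self[of "\<gamma> * x^3"] by (simp add: abs_mult)
    also have "\<dots> \<le> (2 * A^2 * B) * t^3" using g t by (intro mult_right_mono) (auto simp: A2 B_def)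
    also have "\<dots> \<le> A^4 * t^4 + B^2 * t^2"
    proof -
      have "0 \<le> (A^2 * t^2 - B * t)^2" by simp
      then show ?thesis by (simp add: power2_eq_square power3_eq_cube power4_eq_xxxx algebra_simps)
    qed
    finally have p1: "\<beta> * x^4 + \<gamma> * x^3 + \<delta> * x^2 \<le> 2 * (A * t)^4 + 2 * (B * t)^2"
      using A4 d by (simp add: x4 B_def power_mult_distrib)
    have "A * t \<le> 1" using Ar(1) t A0 by (meson mult_left_mono order_trans less_imp_le)
    then have "(A * t)^4 \<le> 1" using A0 t by (intro power_le_one) auto
    moreover have "B * t \<le> 1" using Ar(2) t B0 by (meson mult_left_mono order_trans less_imp_le)
    then have "(B * t)^2 \<le> 1" using B0 t by (intro power_le_one) auto
    ultimately have "\<beta> * x^4 + \<gamma> * x^3 + \<delta> * x^2 \<le> 4" using p1 by linarith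
    then show ?thesis using True by (simp add: L_def f_def)
  qed
  have Ilow: "exp (-4) * (2 * r) \<le> I"
  proof -
    have "exp (-4) * (2 * r) = integral\<^sup>L lborel L" using has_bochner_integral_integral_eq[OF HL] by simp
    also have "\<dots> \<le> integral\<^sup>L lborel f"
      by (intro integral_mono fint HLi Lf)
    also have "\<dots> = I" by (simp add: I_def f_def)
    finally show ?thesis .
  qed
  have S0: "A + G + B > 0" using A0 B0 G0 by simp
  have e4: "exp (4::real) \<le> 100"
  proof -
    have "exp (4::real) = exp 1 ^ 4" by (simp flip: exp_of_nat_mult)
    also have "\<dots> \<le> 3 ^ 4" by (intro power_mono exp_le) auto
    finally show ?thesis by simp
  qed
  have "1/200 * Y \<le> I"
  proof -
    have "Y \<le> r" unfolding Yeq r_def using A0 B0 G0 by (intro divide_left_mono) auto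
    moreover have "1/200 \<le> exp (-4::real) * 2"
      using e4 by (simp add: exp_minus field_simps)
    ultimately have "1/200 * Y \<le> (exp (-4) * 2) * r" using r0
      by (intro mult_mono) (auto simp: Yeq less_imp_le[OF S0])
    then show ?thesis using Ilow by simp
  qed
  moreover have "I \<le> Y / (1/200)"
  proof -
    have sK: "sqrt K > 0" using K0 by simp
    have "A + G + B \<le> 6 * sqrt K" using GAB KA KB by linarith
    then have "(6 * pi) * (A + G + B) \<le> (6 * pi) * (6 * sqrt K)" by (intro mult_left_mono) auto
    then have "6 * pi / sqrt K \<le> 36 * pi / (A + G + B)" using sK S0
      by (simp add: divide_simps)
    also have "\<dots> \<le> 200 / (A + G + B)" using pi_less_4 S0 by (intro divide_right_mono) auto
    finally show ?thesis using Iup by (simp add: Yeq)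
  qed
  ultimately show ?thesis by blast
qed

theorem lemma4p7:
  shows "\<exists>c::real. c > 0 \<and>
    (\<forall>\<beta> \<gamma> \<delta> :: real. \<beta> > 0 \<longrightarrow> \<delta> > 0 \<longrightarrow>
      (\<forall>x::real. \<beta> * x^4 + \<gamma> * x^3 + \<delta> * x^2 \<ge> \<beta> * 0^4 + \<gamma> * 0^3 + \<delta> * 0^2) \<longrightarrow>
      (let I = (LBINT x. exp (- (\<beta> * x^4 + \<gamma> * x^3 + \<delta> * x^2)));
           Y = 1 / (\<beta> powr (1/4) + \<bar>\<gamma>\<bar> powr (1/3) + \<delta> powr (1/2))
       in c * Y \<le> I \<and> I \<le> Y / c))"
  using main_bounds unfolding Let_def by (intro exI[of _ "1/200"]) auto

end
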